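(* Let $(\Gamma,\mathfrak o,\mathfrak m,\mathfrak q)$ be a quantized Brauer graph such that $\Gamma$ is not the graph $\mathbb A_2$ (a single edge with two distinct endpoints), and let $A_\Gamma=KQ_\Gamma/I_\Gamma$ be the associated Brauer graph algebra. Let $\rho\subseteq\rho_\Gamma$ be a minimal generating set of $I_\Gamma$ chosen from the set $\rho_\Gamma$ of Brauer graph relations. Then $\rho$ contains all the relations of type one and all the relations of type three, and $\rho$ contains the relation of type two associated to an edge $s$ truncated at a vertex $\alpha$ if and only if the successor $s_1$ of $s$ at its other endpoint $\beta$ is also a truncated edge (i.e. $s_1$ is truncated at its other endpoint).
   Context: Let $K$ be a field. A Brauer graph $(\Gamma,\mathfrak o,\mathfrak m)$ consists of a finite connected graph $\Gamma$ with at least one edge (loops and multiple edges allowed), a multiplicity function $\mathfrak m:\Gamma_0\to\mathbb Z_{>0}$ on the vertex set $\Gamma_0$, and, for each vertex $\alpha$, a cyclic ordering $\mathfrak o$ of the edges incident with $\alpha$ (a loop at $\alpha$ occurs twice in this cyclic ordering, the two occurrences being treated as distinct). The valency $\mathrm{val}(\alpha)$ is the number of edges incident with $\alpha$, loops counted twice. An edge $t$ is the successor of $s$ at $\alpha$ if $t$ directly follows $s$ in the cyclic ordering at $\alpha$ (if $\mathrm{val}(\alpha)=1$ the unique edge is its own successor). An edge $s$ is truncated at $\alpha$ if $\mathrm{val}(\alpha)=1$, $\mathfrak m(\alpha)=1$ and $s$ is the edge at $\alpha$; $s$ is a truncated edge if it is truncated at one of its endpoints. The successor sequence of $s$ at $\alpha$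 is $s=s_0,s_1,\dots,s_{\mathrm{val}(\alpha)-1}$ with $s_{i+1}$ the successor of $s_i$ at $\alpha$. A quantizing function $\mathfrak q$ assigns $\mathfrak q_{s,\alpha}\in K\setminus\{0\}$ to each pair $(s,\alpha)$ with $s$ incident with $\alpha$ and $s$ not truncated at either endpoint; $(\Gamma,\mathfrak o,\mathfrak m,\mathfrak q)$ is a quantized Brauer graph. The Brauer graph algebra $A_\Gamma=KQ_\Gamma/I_\Gamma$ (paths written left to right) is: if $\Gamma=\mathbb A_2$ with both multiplicities $1$, $A_\Gamma=K[x]/(x^2)$. Otherwise $Q_\Gamma$ has a vertex $v_s$ for each edge $s$, and for each vertex $\alpha$ and each occurrence of $t$ as the successor of $s$ at $\alpha$ with $s$ not truncated at $\alpha$, an arrow $v_s\to v_t$. For $s$ at $\alpha$ not truncated at $\alpha$, with successor sequence $s_0,\dots,s_{v-1}$, $v=\mathrm{val}(\alpha)$, $s_v=s_0$, let $C_{s,\alpha}=a_0a_1\cdots a_{v-1}$, where $a_r$ is the arrow for $s_{r+1}$ succeeding $s_r$ at $\alpha$. The set $\rho_\Gamma$ of Brauer graph relations consists of: type one: for each edge $s$ with endpoints $\alpha,\beta$ not truncated at either, $\mathfrak q_{s,\alpha}C_{s,\alpha}^{\mathfrak m(\alpha)}-\mathfrak q_{s,\beta}C_{s,\beta}^{\mathfrak m(\beta)}$; type two: for each edge $s$ truncated at $\alpha$ with other endpoint $\beta$, writing $C_{s,\beta}=b_0b_1\cdots b_{\mathrm{val}(\beta)-1}$, the path $C_{s,\beta}^{\mathfrak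 m(\beta)}b_0$; type three: each path $ab$ of length $2$ in $Q_\Gamma$ that is not a subpath of any $C_{t,\gamma}$. $I_\Gamma$ is the ideal generated by $\rho_\Gamma$. *)

theory Defs
  imports Main
begin

text \<open>A Brauer graph is encoded by its half-edges (occurrences of edges at vertices).
  hes: finite set of half-edges; vtx h: the vertex at which the occurrence h sits;
  iota: fixed-point-free involution pairing the two half-edges of an edge;
  succ: the cyclic ordering (succ h is the occurrence following h at vtx h);
  mult: multiplicity function on vertices.\<close>

record ('h, 'v) bgraph =
  hes   :: "'h set"
  verts :: "'v set"
  vtx   :: "'h \<Rightarrow> 'v"
  iota  :: "'h \<Rightarrow> 'h"
  succ  :: "'h \<Rightarrow> 'h"
  mult  :: "'v \<Rightarrow> nat"

definition edge_rel :: "('h, 'v) bgraph \<Rightarrow> ('v \<times> 'v) set" where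
  "edge_rel G = {(vtx G h, vtx G (iota G h)) | h. h \<in> hes G}"

definition brauer_graph :: "('h, 'v) bgraph \<Rightarrow> bool" where
  "brauer_graph G \<longleftrightarrow>
     finite (hes G) \<and> hes G \<noteq> {} \<and> vtx G ` hes G = verts G \<and>
     (\<forall>h\<in>hes G. iota G h \<in> hes G \<and> iota G h \<noteq> h \<and> iota G (iota G h) = h) \<and>
     bij_betw (succ G) (hes G) (hes G) \<and>
     (\<forall>h\<in>hes G. vtx G (succ G h) = vtx G h) \<and>
     (\<forall>h\<in>hes G. \<forall>h'\<in>hes G. vtx G h' = vtx G h \<longrightarrow> (\<exists>n. (succ G ^^ n) h = h')) \<and>
     (\<forall>v\<in>verts G. mult G v > 0) \<and>
     (\<forall>a\<in>verts G. \<forall>b\<in>verts G. (a, b) \<in> (edge_rel G)\<^sup>*)"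

definition valency :: "('h, 'v) bgraph \<Rightarrow> 'v \<Rightarrow> nat" where
  "valency G v = card {h \<in> hes G. vtx G h = v}"

definition trunc :: "('h, 'v) bgraph \<Rightarrow> 'h \<Rightarrow> bool" where
  "trunc G h \<longleftrightarrow> valency G (vtx G h) = 1 \<and> mult G (vtx G h) = 1"

definition hedge :: "('h, 'v) bgraph \<Rightarrow> 'h \<Rightarrow> 'h set" where
  "hedge G h = {h, iota G h}"

definition edges :: "('h, 'v) bgraph \<Rightarrow> 'h set set" where
  "edges G = hedge G ` hes G"

definition is_A2 :: "('h, 'v) bgraph \<Rightarrow> bool" where
  "is_A2 G \<longleftrightarrow> card (hes G) = 2 \<and> (\<forall>h\<in>hes G. vtx G (iota G h) \<noteq> vtx G h)"

text \<open>Quantizing function: a nonzero scalar for each pair (s, alpha) with s not truncated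
  at either endpoint; for a loop the pair (s, alpha) is a single pair, so both
  occurrences carry the same value.\<close>
definition quantizing :: "('h, 'v) bgraph \<Rightarrow> ('h \<Rightarrow> 'k::field) \<Rightarrow> bool" where
  "quantizing G q \<longleftrightarrow>
     (\<forall>h\<in>hes G. \<not> trunc G h \<and> \<not> trunc G (iota G h) \<longrightarrow>
        q h \<noteq> 0 \<and> (vtx G (iota G h) = vtx G h \<longrightarrow> q (iota G h) = q h))"

text \<open>Vertices of the quiver: edges of Gamma. Arrows: half-edges h that are not truncated;
  the arrow h goes from hedge h to hedge (succ h). Paths (written left to right) are pairs
  (start vertex, list of arrows).\<close>

definition arrows :: "('h, 'v) bgraph \<Rightarrow> 'h set" where
  "arrows G = {h \<in> hes G. \<not> trunc G h}"

definition valid_path :: "('h, 'v) bgraph \<Rightarrow> 'h set \<times> 'h list \<Rightarrow> bool" where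
  "valid_path G p \<longleftrightarrow>
     fst p \<in> edges G \<and> set (snd p) \<subseteq> arrows G \<and>
     (snd p \<noteq> [] \<longrightarrow> hedge G (hd (snd p)) = fst p) \<and>
     (\<forall>i. Suc i < length (snd p) \<longrightarrow>
        hedge G (succ G (snd p ! i)) = hedge G (snd p ! Suc i))"

definition ptgt :: "('h, 'v) bgraph \<Rightarrow> 'h set \<times> 'h list \<Rightarrow> 'h set" where
  "ptgt G p = (if snd p = [] then fst p else hedge G (succ G (last (snd p))))"

definition KQ :: "('h, 'v) bgraph \<Rightarrow> ('h set \<times> 'h list \<Rightarrow> 'k::field) set" where
  "KQ G = {f. finite {p. f p \<noteq> 0} \<and> (\<forall>p. f p \<noteq> 0 \<longrightarrow> valid_path G p)}"

definition pmult :: "('h, 'v) bgraph \<Rightarrow> ('h set \<times> 'h list \<Rightarrow> 'k::field)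
     \<Rightarrow> ('h set \<times> 'h list \<Rightarrow> 'k) \<Rightarrow> ('h set \<times> 'h list \<Rightarrow> 'k)" where
  "pmult G f g = (\<lambda>p. if valid_path G p then
      (\<Sum>i\<le>length (snd p). f (fst p, take i (snd p)) *
           g (ptgt G (fst p, take i (snd p)), drop i (snd p)))
    else 0)"

inductive_set gen_ideal :: "('h, 'v) bgraph \<Rightarrow> ('h set \<times> 'h list \<Rightarrow> 'k::field) set
     \<Rightarrow> ('h set \<times> 'h list \<Rightarrow> 'k) set"
  for G S where
  gen: "r \<in> S \<Longrightarrow> r \<in> gen_ideal G S"
| zero: "(\<lambda>_. 0) \<in> gen_ideal G S"
| add: "a \<in> gen_ideal G S \<Longrightarrow> b \<in> gen_ideal G S \<Longrightarrow> (\<lambda>p. a p + b p) \<in> gen_ideal G S"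
| lmult: "a \<in> gen_ideal G S \<Longrightarrow> x \<in> KQ G \<Longrightarrow> pmult G x a \<in> gen_ideal G S"
| rmult: "a \<in> gen_ideal G S \<Longrightarrow> x \<in> KQ G \<Longrightarrow> pmult G a x \<in> gen_ideal G S"

definition pvec :: "'h set \<times> 'h list \<Rightarrow> 'h set \<times> 'h list \<Rightarrow> 'k::field" where
  "pvec p = (\<lambda>p'. if p' = p then 1 else 0)"

text \<open>Arrows of C_{s,alpha} for the occurrence h of s at alpha = vtx h, and of its
  m(alpha)-th power.\<close>
definition cyc :: "('h, 'v) bgraph \<Rightarrow> 'h \<Rightarrow> 'h list" where
  "cyc G h = map (\<lambda>i. (succ G ^^ i) h) [0..<valency G (vtx G h)]"

definition cycpow :: "('h, 'v) bgraph \<Rightarrow> 'h \<Rightarrow> 'h list" where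
  "cycpow G h = concat (replicate (mult G (vtx G h)) (cyc G h))"

definition rel1 :: "('h, 'v) bgraph \<Rightarrow> ('h \<Rightarrow> 'k::field) \<Rightarrow> 'h
     \<Rightarrow> 'h set \<times> 'h list \<Rightarrow> 'k" where
  "rel1 G q h = (\<lambda>p. q h * pvec (hedge G h, cycpow G h) p
                    - q (iota G h) * pvec (hedge G h, cycpow G (iota G h)) p)"

text \<open>Type two relation for the edge of h, truncated at vtx h, with beta = vtx (iota h):
  C_{s,beta}^m(beta) b_0.\<close>
definition rel2 :: "('h, 'v) bgraph \<Rightarrow> 'h \<Rightarrow> 'h set \<times> 'h list \<Rightarrow> 'k::field" where
  "rel2 G h = pvec (hedge G h, cycpow G (iota G h) @ [iota G h])"

definition cyc_subpath :: "('h, 'v) bgraph \<Rightarrow> 'h \<Rightarrow> 'h \<Rightarrow> bool" where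
  "cyc_subpath G a b \<longleftrightarrow>
     (\<exists>g\<in>arrows G. \<exists>xs ys. cycpow G g = xs @ [a, b] @ ys)"

definition type3 :: "('h, 'v) bgraph \<Rightarrow> 'h \<Rightarrow> 'h \<Rightarrow> bool" where
  "type3 G a b \<longleftrightarrow> a \<in> arrows G \<and> b \<in> arrows G \<and>
     hedge G (succ G a) = hedge G b \<and> \<not> cyc_subpath G a b"

definition rel3 :: "('h, 'v) bgraph \<Rightarrow> 'h \<Rightarrow> 'h \<Rightarrow> 'h set \<times> 'h list \<Rightarrow> 'k::field" where
  "rel3 G a b = pvec (hedge G a, [a, b])"

definition brauer_relations :: "('h, 'v) bgraph \<Rightarrow> ('h \<Rightarrow> 'k::field)
     \<Rightarrow> ('h set \<times> 'h list \<Rightarrow> 'k) set" where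
  "brauer_relations G q =
     {rel1 G q h | h. h \<in> hes G \<and> \<not> trunc G h \<and> \<not> trunc G (iota G h)}
   \<union> {rel2 G h | h. h \<in> hes G \<and> trunc G h}
   \<union> {rel3 G a b | a b. type3 G a b}"

definition minimal_generating_set :: "('h, 'v) bgraph \<Rightarrow> ('h \<Rightarrow> 'k::field)
     \<Rightarrow> ('h set \<times> 'h list \<Rightarrow> 'k) set \<Rightarrow> bool" where
  "minimal_generating_set G q \<rho> \<longleftrightarrow>
     \<rho> \<subseteq> brauer_relations G q \<and>
     gen_ideal G \<rho> = gen_ideal G (brauer_relations G q) \<and>
     (\<forall>\<rho>'. \<rho>' \<subset> \<rho> \<longrightarrow> gen_ideal G \<rho>' \<noteq> gen_ideal G (brauer_relations G q))"

end

theory Submission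
  imports Defs
begin

lemma bg_succ_in: "brauer_graph G \<Longrightarrow> h \<in> hes G \<Longrightarrow> succ G h \<in> hes G"
  unfolding brauer_graph_def by (meson bij_betw_apply)
lemma bg_succ_vtx: "brauer_graph G \<Longrightarrow> h \<in> hes G \<Longrightarrow> vtx G (succ G h) = vtx G h"
  unfolding brauer_graph_def by blast
lemma bg_iota: assumes "brauer_graph G" "h \<in> hes G"
  shows "iota G h \<in> hes G" "iota G h \<noteq> h" "iota G (iota G h) = h"
  using assms unfolding brauer_graph_def by blast+
lemma bg_fin: "brauer_graph G \<Longrightarrow> finite (hes G)"
  unfolding brauer_graph_def by blast
lemma bg_inj: "brauer_graph G \<Longrightarrow> inj_on (succ G) (hes G)"
  unfolding brauer_graph_def by (simp add: bij_betw_def)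
lemma bg_trans: "brauer_graph G \<Longrightarrow> h \<in> hes G \<Longrightarrow> h' \<in> hes G \<Longrightarrow> vtx G h' = vtx G h
   \<Longrightarrow> \<exists>n. (succ G ^^ n) h = h'"
  unfolding brauer_graph_def by blast
lemma bg_mult: "brauer_graph G \<Longrightarrow> h \<in> hes G \<Longrightarrow> mult G (vtx G h) > 0"
  unfolding brauer_graph_def by blast

lemma funpow_in: assumes "brauer_graph G" "h \<in> hes G"
  shows "(succ G ^^ n) h \<in> hes G \<and> vtx G ((succ G ^^ n) h) = vtx G h"
  by (induction n) (auto simp: assms bg_succ_in bg_succ_vtx)

lemma funpow_cancel: assumes "brauer_graph G" "x \<in> hes G" "y \<in> hes G"
  shows "(succ G ^^ n) x = (succ G ^^ n) y \<Longrightarrow> x = y"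
proof (induction n)
  case 0 then show ?case by simp
next
  case (Suc n)
  have "succ G ((succ G ^^ n) x) = succ G ((succ G ^^ n) y)" using Suc.prems by simp
  then have "(succ G ^^ n) x = (succ G ^^ n) y"
    using bg_inj[OF assms(1)] funpow_in[OF assms(1,2)] funpow_in[OF assms(1,3)]
    by (meson inj_onD)
  then show ?case using Suc.IH by blast
qed

lemma funpow_mult_period: "(f ^^ p) x = x \<Longrightarrow> (f ^^ (k*p)) x = x"
  by (induction k) (simp_all add: funpow_add)

lemma funpow_mod_period: assumes "(f ^^ p) x = x" shows "(f ^^ n) x = (f ^^ (n mod p)) x"
proof -
  have "n = n mod p + (n div p) * p" by simp
  then have "(f ^^ n) x = (f ^^ (n mod p)) ((f ^^ ((n div p) * p)) x)"
    by (metis comp_apply funpow_add)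
  then show ?thesis using funpow_mult_period[OF assms] by simp
qed

lemma period_exists: assumes bg: "brauer_graph G" and g: "g \<in> hes G"
  shows "\<exists>p>0. (succ G ^^ p) g = g"
proof -
  let ?F = "\<lambda>n. (succ G ^^ n) g"
  have sub: "?F ` {..card (hes G)} \<subseteq> hes G" using funpow_in[OF bg g] by auto
  have "\<not> inj_on ?F {..card (hes G)}"
  proof
    assume "inj_on ?F {..card (hes G)}"
    from card_inj_on_le[OF this sub bg_fin[OF bg]] show False by simp
  qed
  then obtain i j where ij: "i \<noteq> j" "?F i = ?F j" unfolding inj_on_def by blast
  have "\<exists>i j. i < j \<and> ?F i = ?F j" using ij by (metis linorder_neqE_nat)
  then obtain i j where ij: "i < j" "?F i = ?F j" by blast
  have "?F j = (succ G ^^ i) ((succ G ^^ (j - i)) g)"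
    using ij(1) by (metis add_diff_inverse_nat comp_apply funpow_add less_imp_not_less)
  then have "(succ G ^^ i) g = (succ G ^^ i) ((succ G ^^ (j - i)) g)" using ij by simp
  then have "g = (succ G ^^ (j - i)) g"
    using funpow_cancel[OF bg g] funpow_in[OF bg g] by blast
  then show ?thesis using ij(1) by (intro exI[of _ "j - i"]) auto
qed

lemma valency_period: assumes bg: "brauer_graph G" and g: "g \<in> hes G"
  shows "(succ G ^^ valency G (vtx G g)) g = g \<and> valency G (vtx G g) > 0"
proof -
  let ?F = "\<lambda>n. (succ G ^^ n) g"
  define p where "p = (LEAST n. 0 < n \<and> ?F n = g)"
  have hp: "0 < p \<and> ?F p = g" unfolding p_def using period_exists[OF bg g] by (rule LeastI_ex)
  have seteq: "{x \<in> hes G. vtx G x = vtx G g} = ?F ` {..<p}"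
  proof
    show "{x \<in> hes G. vtx G x = vtx G g} \<subseteq> ?F ` {..<p}"
    proof
      fix x assume "x \<in> {x \<in> hes G. vtx G x = vtx G g}"
      then obtain n where "?F n = x" using bg_trans[OF bg g] by blast
      then have "?F (n mod p) = x" using funpow_mod_period[where f="succ G" and p=p and x=g and n=n] hp by simp
      then show "x \<in> ?F ` {..<p}" using hp by auto
    qed
    show "?F ` {..<p} \<subseteq> {x \<in> hes G. vtx G x = vtx G g}" using funpow_in[OF bg g] by auto
  qed
  have neq: "?F i \<noteq> ?F j" if "i < j" "j < p" for i j
  proof
    assume e: "?F i = ?F j"
    have "?F j = (succ G ^^ i) ((succ G ^^ (j - i)) g)"
      using that(1) by (metis add_diff_inverse_nat comp_apply funpow_add less_imp_not_less)
    then have "g = (succ G ^^ (j - i)) g"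
      using e funpow_cancel[OF bg g] funpow_in[OF bg g] by metis
    moreover have "\<not> (0 < j - i \<and> ?F (j - i) = g)"
      unfolding p_def[symmetric] by (rule not_less_Least) (use that p_def in auto)
    ultimately show False using that by auto
  qed
  have "inj_on ?F {..<p}"
    unfolding inj_on_def by (metis lessThan_iff linorder_neqE_nat neq)
  then have "card (?F ` {..<p}) = p" by (simp add: card_image)
  then have "valency G (vtx G g) = p" unfolding valency_def using seteq by simp
  then show ?thesis using hp by simp
qed


lemma concat_rep_nth:
  assumes "\<forall>j<length c. c ! j = F (j::nat)"
  shows "i < m * length c \<Longrightarrow> concat (replicate m c) ! i = F (i mod length c)"
proof (induction m arbitrary: i)
  case 0 then show ?case by simp
next
  case (Suc m)
  show ?case
  proof (cases "i < length c")
    case True then show ?thesis using assms by (simp add: nth_append)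
  next
    case False
    then have "concat (replicate (Suc m) c) ! i = concat (replicate m c) ! (i - length c)"
      by (simp add: nth_append)
    also have "\<dots> = F ((i - length c) mod length c)" using Suc False by auto
    also have "(i - length c) mod length c = i mod length c" using False
      by (simp add: le_mod_geq)
    finally show ?thesis .
  qed
qed

lemma cycpow_len: "length (cycpow G g) = mult G (vtx G g) * valency G (vtx G g)"
  unfolding cycpow_def cyc_def by (simp add: length_concat sum_list_replicate)

lemma cycpow_nth: assumes bg: "brauer_graph G" and g: "g \<in> hes G"
  and i: "i < length (cycpow G g)"
  shows "cycpow G g ! i = (succ G ^^ i) g"
proof -
  let ?v = "valency G (vtx G g)"
  have c: "\<forall>j<length (cyc G g). cyc G g ! j = (succ G ^^ j) g" by (simp add: cyc_def)
  have lc: "length (cyc G g) = ?v" by (simp add: cyc_def)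
  have "cycpow G g ! i = (succ G ^^ (i mod ?v)) g"
    using concat_rep_nth[OF c, of i "mult G (vtx G g)"] i lc cycpow_len[of G g]
    unfolding cycpow_def by (simp add: mult.commute)
  also have "\<dots> = (succ G ^^ i) g"
    using funpow_mod_period[where f="succ G" and p="?v" and x=g and n=i] valency_period[OF bg g]
    by simp
  finally show ?thesis .
qed

lemma cycpow_snoc_nth: assumes bg: "brauer_graph G" and g: "g \<in> hes G"
  and i: "i \<le> length (cycpow G g)"
  shows "(cycpow G g @ [g]) ! i = (succ G ^^ i) g"
proof (cases "i < length (cycpow G g)")
  case True then show ?thesis using cycpow_nth[OF bg g] by (simp add: nth_append)
next
  case False
  then have "i = mult G (vtx G g) * valency G (vtx G g)" using i cycpow_len by (metis le_neq_implies_less)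
  then show ?thesis using False funpow_mult_period[where f="succ G" and x=g] valency_period[OF bg g]
    by (simp add: nth_append cycpow_len)
qed

lemma cycpow_pos: assumes bg: "brauer_graph G" and g: "g \<in> hes G"
  shows "length (cycpow G g) > 0"
  using valency_period[OF bg g] bg_mult[OF bg g] by (simp add: cycpow_len)

lemma cycpow_0: assumes bg: "brauer_graph G" and g: "g \<in> hes G"
  shows "cycpow G g ! 0 = g"
  using cycpow_nth[OF bg g] cycpow_pos[OF bg g] by simp

lemma cycpow_set: assumes bg: "brauer_graph G" and g: "g \<in> hes G"
  shows "x \<in> set (cycpow G g) \<Longrightarrow> x \<in> hes G \<and> vtx G x = vtx G g"
  by (metis assms cycpow_nth funpow_in in_set_conv_nth)

lemma cycpow_snoc_set: assumes bg: "brauer_graph G" and g: "g \<in> hes G"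
  shows "x \<in> set (cycpow G g @ [g]) \<Longrightarrow> x \<in> hes G \<and> vtx G x = vtx G g"
  using cycpow_set[OF assms] g by auto

lemma trunc_len: assumes bg: "brauer_graph G" and g: "g \<in> hes G" and nt: "\<not> trunc G g"
  shows "length (cycpow G g) \<ge> 2"
proof -
  define v where "v = valency G (vtx G g)"
  define m where "m = mult G (vtx G g)"
  have v: "v > 0" using valency_period[OF bg g] by (simp add: v_def)
  have m: "m > 0" using bg_mult[OF bg g] by (simp add: m_def)
  have n: "\<not> (v = 1 \<and> m = 1)" using nt by (simp add: trunc_def v_def m_def)
  have "m * v \<ge> 2"
  proof (cases "m \<ge> 2")
    case True
    then show ?thesis using v mult_le_mono[of 2 m 1 v] by simp
  next
    case False
    then have "m = 1" using m by linarith
    then show ?thesis using v n by simp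
  qed
  then show ?thesis by (simp add: cycpow_len v_def m_def)
qed

definition schain :: "('h, 'v) bgraph \<Rightarrow> 'h list \<Rightarrow> bool" where
  "schain G l \<longleftrightarrow> (\<forall>i. Suc i < length l \<longrightarrow> l ! Suc i = succ G (l ! i))"

lemma schain_cycpow: assumes bg: "brauer_graph G" and g: "g \<in> hes G"
  shows "schain G (cycpow G g)"
  unfolding schain_def
proof (intro allI impI)
  fix i assume i: "Suc i < length (cycpow G g)"
  then show "cycpow G g ! Suc i = succ G (cycpow G g ! i)"
    using cycpow_nth[OF bg g, of i] cycpow_nth[OF bg g, of "Suc i"] by simp
qed

lemma schain_cycpow_snoc: assumes bg: "brauer_graph G" and g: "g \<in> hes G"
  shows "schain G (cycpow G g @ [g])"
  unfolding schain_def
proof (intro allI impI)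
  fix i assume i: "Suc i < length (cycpow G g @ [g])"
  then have i1: "Suc i \<le> length (cycpow G g)" "i \<le> length (cycpow G g)" by simp_all
  show "(cycpow G g @ [g]) ! Suc i = succ G ((cycpow G g @ [g]) ! i)"
    using cycpow_snoc_nth[OF bg g i1(1)] cycpow_snoc_nth[OF bg g i1(2)] by simp
qed

lemma schain_infix: "schain G (xs @ M @ ys) \<Longrightarrow> schain G M"
  unfolding schain_def
proof (intro allI impI)
  fix i assume a: "\<forall>i. Suc i < length (xs @ M @ ys) \<longrightarrow>
          (xs @ M @ ys) ! Suc i = succ G ((xs @ M @ ys) ! i)" and i: "Suc i < length M"
  from a[rule_format, of "length xs + i"] i show "M ! Suc i = succ G (M ! i)"
    by (simp add: nth_append)
qed

lemma schain_pair: "schain G [a, b] \<Longrightarrow> b = succ G a"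
  unfolding schain_def by auto

lemma infix_len: "L = xs @ M @ ys \<Longrightarrow> length M \<le> length L" by simp
lemma infix_eq: "L = xs @ M @ ys \<Longrightarrow> length M = length L \<Longrightarrow> M = L" by simp
lemma infix_nth0: "L = xs @ M @ ys \<Longrightarrow> M \<noteq> [] \<Longrightarrow> M ! 0 = L ! length xs"
  by (simp add: nth_append)
lemma infix_set: "L = xs @ M @ ys \<Longrightarrow> set M \<subseteq> set L" by auto

lemma arrow_cyc_subpath: assumes bg: "brauer_graph G" and a: "a \<in> arrows G"
  shows "cyc_subpath G a (succ G a)"
proof -
  have ah: "a \<in> hes G" and nt: "\<not> trunc G a" using a by (auto simp: arrows_def)
  let ?l = "cycpow G a"
  have len: "length ?l \<ge> 2" using trunc_len[OF bg ah nt] .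
  have "?l = ?l ! 0 # ?l ! 1 # drop 2 ?l"
  proof (cases ?l)
    case Nil then show ?thesis using len by simp
  next
    case (Cons x xs)
    then show ?thesis using len by (cases xs) auto
  qed
  also have "?l ! 0 = a" using cycpow_0[OF bg ah] .
  also have "?l ! 1 = succ G a" using cycpow_nth[OF bg ah, of 1] len by simp
  finally have "?l = [] @ [a, succ G a] @ drop 2 ?l" by simp
  then show ?thesis unfolding cyc_subpath_def using a by (intro bexI[of _ a] exI[of _ "[]"] exI[of _ "drop 2 ?l"])
qed

lemma type3_not_succ: assumes bg: "brauer_graph G" and t: "type3 G a b" shows "b \<noteq> succ G a"
proof
  assume e: "b = succ G a"
  have a: "a \<in> arrows G" and n: "\<not> cyc_subpath G a b" using t unfolding type3_def by simp_all
  show False using arrow_cyc_subpath[OF bg a] n e by simp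
qed


lemma gen_ideal_closure:
  assumes "S \<subseteq> gen_ideal G T"
  shows "f \<in> gen_ideal G S \<Longrightarrow> f \<in> gen_ideal G T"
  by (induction f rule: gen_ideal.induct) (use assms in \<open>auto intro: gen_ideal.intros\<close>)

lemma gen_ideal_mono: "S \<subseteq> T \<Longrightarrow> gen_ideal G S \<subseteq> gen_ideal G T"
  using gen_ideal_closure[of S G T] gen_ideal.gen[of _ T G] by blast

lemma ideal_vanish:
  assumes van0: "\<forall>r\<in>S. \<forall>p. (\<exists>xs ys. L = xs @ snd p @ ys) \<longrightarrow> r p = 0"
  shows "f \<in> gen_ideal G S \<Longrightarrow> (\<exists>xs ys. L = xs @ snd p @ ys) \<Longrightarrow> f p = 0"
proof (induction f arbitrary: p rule: gen_ideal.induct)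
  case (gen r) then show ?case using van0 by blast
next
  case zero then show ?case by simp
next
  case (add a b) then show ?case by simp
next
  case (lmult a x)
  from lmult.prems obtain xs ys where L: "L = xs @ snd p @ ys" by blast
  have "a (ptgt G (fst p, take i (snd p)), drop i (snd p)) = 0" for i
  proof -
    have "\<exists>xs' ys'. L = xs' @ drop i (snd p) @ ys'"
      by (intro exI[of _ "xs @ take i (snd p)"] exI[of _ ys]) (simp add: L)
    then show ?thesis using lmult.IH[of "(ptgt G (fst p, take i (snd p)), drop i (snd p))"] by auto
  qed
  then show ?case unfolding pmult_def by simp
next
  case (rmult a x)
  from rmult.prems obtain xs ys where L: "L = xs @ snd p @ ys" by blast
  have "a (fst p, take i (snd p)) = 0" for i
  proof -
    have "\<exists>xs' ys'. L = xs' @ take i (snd p) @ ys'"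
      by (intro exI[of _ xs] exI[of _ "drop i (snd p) @ ys"]) (simp add: L)
    then show ?thesis using rmult.IH[of "(fst p, take i (snd p))"] by auto
  qed
  then show ?case unfolding pmult_def by simp
qed

lemma rel1_supp: "rel1 G q t p \<noteq> 0 \<Longrightarrow> snd p = cycpow G t \<or> snd p = cycpow G (iota G t)"
  unfolding rel1_def pvec_def by (auto split: if_splits)
lemma rel2_supp: "rel2 G t p \<noteq> 0 \<Longrightarrow> snd p = cycpow G (iota G t) @ [iota G t]"
  unfolding rel2_def pvec_def by (auto split: if_splits)
lemma rel3_supp: "rel3 G a b p \<noteq> 0 \<Longrightarrow> snd p = [a, b]"
  unfolding rel3_def pvec_def by (auto split: if_splits)

lemma BR_cases:
  assumes "r \<in> brauer_relations G q"
  obtains (one) t where "r = rel1 G q t" "t \<in> hes G" "\<not> trunc G t" "\<not> trunc G (iota G t)"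
  | (two) t where "r = rel2 G t" "t \<in> hes G" "trunc G t"
  | (three) a b where "r = rel3 G a b" "type3 G a b"
  using assms unfolding brauer_relations_def by blast

lemma trunc_vtx: "vtx G x = vtx G y \<Longrightarrow> trunc G x = trunc G y"
  unfolding trunc_def by simp

lemma cycpow_same_len: "vtx G x = vtx G y \<Longrightarrow> length (cycpow G x) = length (cycpow G y)"
  by (simp add: cycpow_len)

lemma val1_unique: assumes bg: "brauer_graph G" and t: "trunc G h" "h \<in> hes G"
  and x: "x \<in> hes G" "vtx G x = vtx G h"
  shows "x = h"
proof -
  have f: "finite {y \<in> hes G. vtx G y = vtx G h}" using bg_fin[OF bg] by simp
  have "card {y \<in> hes G. vtx G y = vtx G h} = 1" using t by (simp add: trunc_def valency_def)
  then obtain z where "{y \<in> hes G. vtx G y = vtx G h} = {z}" by (rule card_1_singletonE)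
  moreover have "x \<in> {y \<in> hes G. vtx G y = vtx G h}" "h \<in> {y \<in> hes G. vtx G y = vtx G h}"
    using t x by auto
  ultimately show ?thesis by (metis singletonD)
qed

lemma notA2: assumes bg: "brauer_graph G" and h: "h \<in> hes G" and t: "trunc G h" "trunc G (iota G h)"
  shows "is_A2 G"
proof -
  let ?a = "vtx G h" and ?b = "vtx G (iota G h)"
  have ih: "iota G h \<in> hes G" "iota G h \<noteq> h" "iota G (iota G h) = h" using bg_iota[OF bg h] by auto
  have ua: "x = h" if "x \<in> hes G" "vtx G x = ?a" for x using val1_unique[OF bg t(1) h] that by blast
  have ub: "x = iota G h" if "x \<in> hes G" "vtx G x = ?b" for x using val1_unique[OF bg t(2) ih(1)] that by blast
  have ab: "?a \<noteq> ?b" using ua[OF ih(1)] ih(2) by auto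
  have av: "?a \<in> verts G" using bg h unfolding brauer_graph_def by blast
  have reach: "y \<in> {?a, ?b}" if "(?a, y) \<in> (edge_rel G)\<^sup>*" for y
    using that
  proof (induction rule: rtrancl_induct)
    case base then show ?case by simp
  next
    case (step y z)
    then obtain x where x: "x \<in> hes G" "y = vtx G x" "z = vtx G (iota G x)"
      unfolding edge_rel_def by blast
    show ?case
    proof (cases "y = ?a")
      case True then have "x = h" using ua x by simp
      then show ?thesis using x by simp
    next
      case False then have "y = ?b" using step by simp
      then have "x = iota G h" using ub x by simp
      then show ?thesis using x ih by simp
    qed
  qed
  have "hes G \<subseteq> {h, iota G h}"
  proof
    fix x assume x: "x \<in> hes G"
    have "vtx G x \<in> verts G" using bg x unfolding brauer_graph_def by blast
    then have "(?a, vtx G x) \<in> (edge_rel G)\<^sup>*" using bg av unfolding brauer_graph_def by blast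
    then have "vtx G x \<in> {?a, ?b}" by (rule reach)
    then show "x \<in> {h, iota G h}" using ua ub x by blast
  qed
  then have "hes G = {h, iota G h}" using h ih by blast
  then show ?thesis unfolding is_A2_def using ih ab by auto
qed


lemma cyc_infix_same:
  assumes bg: "brauer_graph G" and u: "u \<in> hes G" and h: "h \<in> hes G"
    and L: "cycpow G h = xs @ cycpow G u @ ys"
  shows "u = h"
proof -
  have "u \<in> set (cycpow G u)" using cycpow_0[OF bg u] cycpow_pos[OF bg u] by (metis nth_mem)
  then have "u \<in> set (cycpow G h)" using L by auto
  then have "vtx G u = vtx G h" using cycpow_set[OF bg h] by blast
  then have "length (cycpow G u) = length (cycpow G h)" by (rule cycpow_same_len)
  then have "cycpow G u = cycpow G h" by (rule infix_eq[OF L]) 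
  then have "cycpow G u ! 0 = cycpow G h ! 0" by (rule arg_cong)
  then show ?thesis unfolding cycpow_0[OF bg u] cycpow_0[OF bg h] .
qed

lemma van1:
  assumes bg: "brauer_graph G" and h: "h \<in> hes G" and r: "r \<in> brauer_relations G q"
    and n1: "r \<noteq> rel1 G q h" and n2: "r \<noteq> rel1 G q (iota G h)"
    and L: "\<exists>xs ys. cycpow G h = xs @ snd p @ ys"
  shows "r p = 0"
proof (rule ccontr)
  assume nz: "r p \<noteq> 0"
  from L obtain xs ys where L: "cycpow G h = xs @ snd p @ ys" by blast
  from r show False
  proof (cases rule: BR_cases)
    case (one t)
    have it: "iota G t \<in> hes G" "iota G (iota G t) = t" using bg_iota[OF bg one(2)] by auto
    from rel1_supp[of G q t p] nz one(1) have "snd p = cycpow G t \<or> snd p = cycpow G (iota G t)" by simp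
    then show False
    proof
      assume "snd p = cycpow G t"
      then have "t = h" using cyc_infix_same[OF bg one(2) h] L by simp
      then show False using n1 one by simp
    next
      assume "snd p = cycpow G (iota G t)"
      then have "iota G t = h" using cyc_infix_same[OF bg it(1) h] L by simp
      then show False using n2 one it by auto
    qed
  next
    case (two t)
    have it: "iota G t \<in> hes G" using bg_iota[OF bg two(2)] by auto
    have sp: "snd p = cycpow G (iota G t) @ [iota G t]" using rel2_supp[of G t p] nz two(1) by simp
    then have "iota G t \<in> set (cycpow G h)" using L by auto
    then have "vtx G (iota G t) = vtx G h" using cycpow_set[OF bg h] by blast
    then have "length (snd p) = length (cycpow G h) + 1" using sp cycpow_same_len by (metis length_append_singleton Suc_eq_plus1)
    then show False using infix_len[OF L] by simp
  next
    case (three a b)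
    have "snd p = [a, b]" using rel3_supp[of G a b p] nz three(1) by simp
    then have "schain G [a, b]" using schain_infix schain_cycpow[OF bg h] L by metis
    from schain_pair[OF this] show False using type3_not_succ[OF bg three(2)] by simp
  qed
qed

lemma part1:
  assumes bg: "brauer_graph G" and qz: "quantizing G q" and mg: "minimal_generating_set G q \<rho>"
    and h: "h \<in> hes G" "\<not> trunc G h" "\<not> trunc G (iota G h)"
  shows "rel1 G q h \<in> \<rho> \<or> rel1 G q (iota G h) \<in> \<rho>"
proof (rule ccontr)
  assume na: "\<not> ?thesis"
  let ?T = "brauer_relations G q - {rel1 G q h, rel1 G q (iota G h)}"
  have sub: "\<rho> \<subseteq> ?T" using mg na unfolding minimal_generating_set_def by blast
  have "rel1 G q h \<in> gen_ideal G (brauer_relations G q)"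
    by (rule gen_ideal.gen) (auto simp: brauer_relations_def h)
  then have "rel1 G q h \<in> gen_ideal G \<rho>" using mg unfolding minimal_generating_set_def by blast
  then have inT: "rel1 G q h \<in> gen_ideal G ?T" using gen_ideal_mono[OF sub] by blast
  have van: "\<forall>r\<in>?T. \<forall>p. (\<exists>xs ys. cycpow G h = xs @ snd p @ ys) \<longrightarrow> r p = 0"
    using van1[OF bg h(1)] by blast
  have z: "rel1 G q h (hedge G h, cycpow G h) = 0"
    by (rule ideal_vanish[OF van inT]) (intro exI[of _ "[]"], simp)
  have ih: "iota G h \<in> hes G" using bg_iota[OF bg h(1)] by auto
  have "cycpow G h \<noteq> cycpow G (iota G h)"
    using cycpow_0[OF bg h(1)] cycpow_0[OF bg ih] bg_iota[OF bg h(1)] by metis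
  then have "rel1 G q h (hedge G h, cycpow G h) = q h" unfolding rel1_def pvec_def by simp
  moreover have "q h \<noteq> 0" using qz h unfolding quantizing_def by blast
  ultimately show False using z by simp
qed

lemma van2:
  assumes bg: "brauer_graph G" and r: "r \<in> brauer_relations G q"
    and n1: "r \<noteq> rel3 G a b" and ab: "type3 G a b"
    and L: "\<exists>xs ys. [a, b] = xs @ snd p @ ys"
  shows "r p = 0"
proof (rule ccontr)
  assume nz: "r p \<noteq> 0"
  from L obtain xs ys where L: "[a, b] = xs @ snd p @ ys" by blast
  from r show False
  proof (cases rule: BR_cases)
    case (one t)
    have it: "iota G t \<in> hes G" "iota G (iota G t) = t" using bg_iota[OF bg one(2)] by auto
    from rel1_supp[of G q t p] nz one(1) obtain u where u: "u \<in> hes G" "\<not> trunc G u" "snd p = cycpow G u"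
      using one it by metis
    have "length (snd p) \<ge> 2" using trunc_len[OF bg u(1,2)] u(3) by simp
    then have "snd p = [a, b]" using infix_eq[OF L] infix_len[OF L] by simp
    then have "schain G [a, b]" using schain_cycpow[OF bg u(1)] u(3) by simp
    from schain_pair[OF this] show False using type3_not_succ[OF bg ab] by simp
  next
    case (two t)
    have it: "iota G t \<in> hes G" using bg_iota[OF bg two(2)] by auto
    have sp: "snd p = cycpow G (iota G t) @ [iota G t]" using rel2_supp[of G t p] nz two(1) by simp
    have "length (snd p) \<ge> 2" using sp cycpow_pos[OF bg it] by (simp add: Suc_leI)
    then have "snd p = [a, b]" using infix_eq[OF L] infix_len[OF L] by simp
    then have "schain G [a, b]" using schain_cycpow_snoc[OF bg it] sp by metis
    from schain_pair[OF this] show False using type3_not_succ[OF bg ab] by simp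
  next
    case (three a' b')
    have "snd p = [a', b']" using rel3_supp[of G a' b' p] nz three(1) by simp
    then have "[a', b'] = [a, b]" using infix_eq[OF L] by simp
    then show False using n1 three by simp
  qed
qed

lemma part2:
  fixes G :: "('h, 'v) bgraph" and q :: "'h \<Rightarrow> 'k::field"
  assumes bg: "brauer_graph G" and mg: "minimal_generating_set G q \<rho>" and ab: "type3 G a b"
  shows "rel3 G a b \<in> \<rho>"
proof (rule ccontr)
  assume na: "\<not> ?thesis"
  let ?T = "brauer_relations G q - {rel3 G a b}"
  have sub: "\<rho> \<subseteq> ?T" using mg na unfolding minimal_generating_set_def by blast
  have "rel3 G a b \<in> gen_ideal G (brauer_relations G q)"
    by (rule gen_ideal.gen) (use ab in \<open>auto simp: brauer_relations_def\<close>)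
  then have "rel3 G a b \<in> gen_ideal G \<rho>" using mg unfolding minimal_generating_set_def by blast
  then have inT: "rel3 G a b \<in> gen_ideal G ?T" using gen_ideal_mono[OF sub] by blast
  have van: "\<forall>r\<in>?T. \<forall>p. (\<exists>xs ys. [a, b] = xs @ snd p @ ys) \<longrightarrow> r p = 0"
    using van2[OF bg _ _ ab] by blast
  have z: "rel3 G a b (hedge G a, [a, b]) = (0::'k)"
    by (rule ideal_vanish[OF van inT]) (intro exI[of _ "[]"], simp)
  then show False unfolding rel3_def pvec_def by simp
qed


lemma van3a:
  assumes bg: "brauer_graph G" and h: "h \<in> hes G" and th: "trunc G h"
    and ts: "trunc G (iota G (succ G (iota G h)))"
    and r: "r \<in> brauer_relations G q" and n1: "r \<noteq> rel2 G h"
    and L: "\<exists>xs ys. cycpow G (iota G h) @ [iota G h] = xs @ snd p @ ys"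
  shows "r p = 0"
proof (rule ccontr)
  assume nz: "r p \<noteq> 0"
  let ?b = "iota G h"
  let ?L = "cycpow G ?b @ [?b]"
  from L obtain xs ys where L: "?L = xs @ snd p @ ys" by blast
  have b: "?b \<in> hes G" "iota G ?b = h" using bg_iota[OF bg h] by auto
  have Lset: "\<And>x. x \<in> set ?L \<Longrightarrow> x \<in> hes G \<and> vtx G x = vtx G ?b"
    using cycpow_snoc_set[OF bg b(1)] by blast
  have pos: "length (cycpow G ?b) > 0" using cycpow_pos[OF bg b(1)] .
  have L0: "?L ! 0 = ?b" using cycpow_snoc_nth[OF bg b(1), of 0] by simp
  have L1: "?L ! 1 = succ G ?b" using cycpow_snoc_nth[OF bg b(1), of 1] pos by simp
  from r show False
  proof (cases rule: BR_cases)
    case (one t)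
    have it: "iota G t \<in> hes G" "iota G (iota G t) = t" using bg_iota[OF bg one(2)] by auto
    from rel1_supp[of G q t p] nz one(1) obtain u where
      u: "u \<in> hes G" "\<not> trunc G (iota G u)" "snd p = cycpow G u"
      using one it by metis
    have u0: "cycpow G u ! 0 = u" using cycpow_0[OF bg u(1)] .
    have "u \<in> set (cycpow G u)" using u0 cycpow_pos[OF bg u(1)] by (metis nth_mem)
    then have "u \<in> set ?L" using L u(3) by auto
    then have "vtx G u = vtx G ?b" using Lset by blast
    from cycpow_same_len[OF this] have "length (snd p) = length (cycpow G ?b)" using u(3) by simp
    moreover have "length ?L = length xs + length (snd p) + length ys" using L by simp
    ultimately have lx: "length xs \<le> 1" by simp
    have "u = ?L ! length xs" using infix_nth0[OF L] u(3) u0 cycpow_pos[OF bg u(1)] by auto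
    then have "u = ?b \<or> u = succ G ?b" using lx L0 L1 by (cases "length xs") auto
    then show False
    proof
      assume "u = ?b" then show False using u(2) b th by simp
    next
      assume "u = succ G ?b" then show False using u(2) ts by simp
    qed
  next
    case (two t)
    have it: "iota G t \<in> hes G" "iota G (iota G t) = t" using bg_iota[OF bg two(2)] by auto
    have sp: "snd p = cycpow G (iota G t) @ [iota G t]" using rel2_supp[of G t p] nz two(1) by simp
    then have "iota G t \<in> set ?L" using L by auto
    then have "vtx G (iota G t) = vtx G ?b" using Lset by blast
    then have "length (snd p) = length ?L" using sp cycpow_same_len by (metis length_append_singleton)
    then have "snd p = ?L" using infix_eq[OF L] by simp
    then have "iota G t = ?b" using sp L0 by (metis nth_append_length nth_append pos cycpow_0[OF bg it(1)] cycpow_pos[OF bg it(1)] append_eq_append_conv length_append_singleton)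
    then have "t = h" using it b by metis
    then show False using n1 two by simp
  next
    case (three a c)
    have "snd p = [a, c]" using rel3_supp[of G a c p] nz three(1) by simp
    then have "schain G [a, c]" using schain_infix schain_cycpow_snoc[OF bg b(1)] L by metis
    from schain_pair[OF this] show False using type3_not_succ[OF bg three(2)] by simp
  qed
qed

lemma part3a:
  fixes G :: "('h, 'v) bgraph" and q :: "'h \<Rightarrow> 'k::field"
  assumes bg: "brauer_graph G" and mg: "minimal_generating_set G q \<rho>"
    and h: "h \<in> hes G" and th: "trunc G h" and ts: "trunc G (iota G (succ G (iota G h)))"
  shows "rel2 G h \<in> \<rho>"
proof (rule ccontr)
  assume na: "\<not> ?thesis"
  let ?T = "brauer_relations G q - {rel2 G h}"
  have sub: "\<rho> \<subseteq> ?T" using mg na unfolding minimal_generating_set_def by blast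
  have "rel2 G h \<in> gen_ideal G (brauer_relations G q)"
    by (rule gen_ideal.gen) (auto simp: brauer_relations_def h th)
  then have "rel2 G h \<in> gen_ideal G \<rho>" using mg unfolding minimal_generating_set_def by blast
  then have inT: "rel2 G h \<in> gen_ideal G ?T" using gen_ideal_mono[OF sub] by blast
  have van: "\<forall>r\<in>?T. \<forall>p. (\<exists>xs ys. cycpow G (iota G h) @ [iota G h] = xs @ snd p @ ys) \<longrightarrow> r p = 0"
    using van3a[OF bg h th ts] by blast
  have z: "rel2 G h (hedge G h, cycpow G (iota G h) @ [iota G h]) = (0::'k)"
    by (rule ideal_vanish[OF van inT]) (intro exI[of _ "[]"], simp)
  then show False unfolding rel2_def pvec_def by simp
qed


lemma pmult_pvec_left:
  "pmult G (\<lambda>p. a * pvec (e, xs) p) g r =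
    (if valid_path G r \<and> fst r = e \<and> length xs \<le> length (snd r) \<and> take (length xs) (snd r) = xs
     then a * g (ptgt G (e, xs), drop (length xs) (snd r)) else 0)"
proof (cases "valid_path G r")
  case False then show ?thesis unfolding pmult_def by simp
next
  case True
  let ?n = "length (snd r)"
  have eq: "(a * pvec (e, xs) (fst r, take i (snd r)) * g (ptgt G (fst r, take i (snd r)), drop i (snd r)))
     = (if i = length xs then (if fst r = e \<and> take (length xs) (snd r) = xs
          then a * g (ptgt G (e, xs), drop (length xs) (snd r)) else 0) else 0)"
    if "i \<in> {..?n}" for i
  proof (cases "i = length xs")
    case True then show ?thesis unfolding pvec_def by simp
  next
    case False
    have l: "length (take i (snd r)) = i" using that by simp
    have "take i (snd r) \<noteq> xs"
    proof
      assume "take i (snd r) = xs"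
      then have "length (take i (snd r)) = length xs" by simp
      then show False using l False by simp
    qed
    then have "pvec (e, xs) (fst r, take i (snd r)) = (0::'a)" unfolding pvec_def by simp
    then show ?thesis using False by simp
  qed
  have "pmult G (\<lambda>p. a * pvec (e, xs) p) g r = (\<Sum>i\<le>?n. a * pvec (e, xs) (fst r, take i (snd r)) * g (ptgt G (fst r, take i (snd r)), drop i (snd r)))"
    unfolding pmult_def using True by (simp only: if_True)
  also have "\<dots> = (\<Sum>i\<le>?n. (if i = length xs then (if fst r = e \<and> take (length xs) (snd r) = xs
          then a * g (ptgt G (e, xs), drop (length xs) (snd r)) else 0) else 0))"
    by (rule sum.cong) (rule refl, rule eq)
  also have "\<dots> = (if length xs \<le> ?n then (if fst r = e \<and> take (length xs) (snd r) = xs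
          then a * g (ptgt G (e, xs), drop (length xs) (snd r)) else 0) else 0)"
    by (subst sum.delta) auto
  finally show ?thesis using True by auto
qed

lemma valid_chain:
  assumes "l \<noteq> []" "schain G l" "set l \<subseteq> arrows G"
  shows "valid_path G (hedge G (hd l), l)"
proof -
  have "hd l \<in> hes G" using assms by (metis arrows_def hd_in_set mem_Collect_eq subsetD)
  then have "hedge G (hd l) \<in> edges G" unfolding edges_def by blast
  then show ?thesis unfolding valid_path_def using assms unfolding schain_def by simp
qed

lemma KQ_pvec: "valid_path G P \<Longrightarrow> (\<lambda>p. a * pvec P p) \<in> KQ G"
proof -
  assume v: "valid_path G P"
  have "{p. a * pvec P p \<noteq> 0} \<subseteq> {P}" unfolding pvec_def by auto
  then have "finite {p. a * pvec P p \<noteq> 0}" by (rule finite_subset) simp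
  moreover have "\<forall>p. a * pvec P p \<noteq> 0 \<longrightarrow> valid_path G p" using v unfolding pvec_def by auto
  ultimately show ?thesis unfolding KQ_def by simp
qed


lemma part3b:
  fixes G :: "('h, 'v) bgraph" and q :: "'h \<Rightarrow> 'k::field"
  assumes bg: "brauer_graph G" and qz: "quantizing G q" and nA: "\<not> is_A2 G"
    and mg: "minimal_generating_set G q \<rho>"
    and h: "h \<in> hes G" and th: "trunc G h" and inr: "rel2 G h \<in> \<rho>"
  shows "trunc G (iota G (succ G (iota G h)))"
proof (rule ccontr)
  let ?b = "iota G h"
  let ?s = "succ G ?b"
  let ?s' = "iota G ?s"
  assume ns': "\<not> trunc G ?s'"
  have b: "?b \<in> hes G" "iota G ?b = h" using bg_iota[OF bg h] by auto
  have nb: "\<not> trunc G ?b" using notA2[OF bg h th] nA by blast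
  have s: "?s \<in> hes G" "vtx G ?s = vtx G ?b" using bg_succ_in[OF bg b(1)] bg_succ_vtx[OF bg b(1)] by auto
  have ns: "\<not> trunc G ?s" using trunc_vtx[OF s(2)] nb by blast
  have s': "?s' \<in> hes G" "iota G ?s' = ?s" "?s' \<noteq> ?s" using bg_iota[OF bg s(1)] by auto
  have hb: "hedge G ?b = hedge G h" unfolding hedge_def using b by auto
  have hs: "hedge G ?s' = hedge G ?s" unfolding hedge_def using s' by auto
  have ar_b: "?b \<in> arrows G" using b nb by (simp add: arrows_def)
  have ar_s': "?s' \<in> arrows G" using s' ns' by (simp add: arrows_def)
  have t3: "type3 G ?b ?s'"
    unfolding type3_def
  proof (intro conjI)
    show "hedge G (succ G ?b) = hedge G ?s'" using hs by simp
    show "\<not> cyc_subpath G ?b ?s'"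
    proof
      assume "cyc_subpath G ?b ?s'"
      then obtain g xs ys where g: "g \<in> arrows G" "cycpow G g = xs @ [?b, ?s'] @ ys"
        unfolding cyc_subpath_def by blast
      have "g \<in> hes G" using g by (simp add: arrows_def)
      then have "schain G (xs @ [?b, ?s'] @ ys)" using schain_cycpow[OF bg] g by metis
      then have "schain G [?b, ?s']" by (rule schain_infix)
      from schain_pair[OF this] show False using s'(3) by simp
    qed
  qed (use ar_b ar_s' in auto)
  have r3: "rel3 G ?b ?s' \<in> \<rho>" using part2[OF bg mg t3] .
  have r1: "rel1 G q ?s \<in> \<rho> \<or> rel1 G q ?s' \<in> \<rho>" using part1[OF bg qz mg s(1) ns] ns' by simp
  have qs: "q ?s \<noteq> 0" using qz s(1) ns ns' unfolding quantizing_def by blast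
  have Q: "\<And>x. x \<in> hes G \<Longrightarrow> \<not> trunc G x \<Longrightarrow> \<not> trunc G (iota G x) \<Longrightarrow> q x \<noteq> 0"
    using qz unfolding quantizing_def by blast
  have qs': "q ?s' \<noteq> 0" using Q[OF s'(1) ns'] ns s'(2) by simp
  have lb: "length (cycpow G ?b) \<ge> 2" using trunc_len[OF bg b(1) nb] .
  have lbs: "length (cycpow G ?s) = length (cycpow G ?b)" using cycpow_same_len[OF s(2)] .
  have cs0: "cycpow G ?s ! 0 = ?s" "cycpow G ?s' ! 0 = ?s'" using cycpow_0[OF bg s(1)] cycpow_0[OF bg s'(1)] by auto
  have cneq: "cycpow G ?s \<noteq> cycpow G ?s'"
  proof
    assume "cycpow G ?s = cycpow G ?s'"
    then have "cycpow G ?s ! 0 = cycpow G ?s' ! 0" by simp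
    then show False using cs0 s'(3) by simp
  qed
  have listeq: "cycpow G ?b @ [?b] = ?b # cycpow G ?s"
  proof (rule nth_equalityI)
    show "length (cycpow G ?b @ [?b]) = length (?b # cycpow G ?s)" using lbs by simp
    fix i assume i: "i < length (cycpow G ?b @ [?b])"
    show "(cycpow G ?b @ [?b]) ! i = (?b # cycpow G ?s) ! i"
    proof (cases i)
      case 0 then show ?thesis using cycpow_snoc_nth[OF bg b(1), of 0] by simp
    next
      case (Suc j)
      have "(cycpow G ?b @ [?b]) ! i = (succ G ^^ Suc j) ?b" using cycpow_snoc_nth[OF bg b(1), of i] i Suc by simp
      also have "\<dots> = (succ G ^^ j) ?s" by (simp add: funpow_Suc_right del: funpow.simps)
      also have "\<dots> = cycpow G ?s ! j" using cycpow_nth[OF bg s(1), of j] i Suc lbs by simp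
      finally show ?thesis using Suc by simp
    qed
  qed
  have cs'_cons: "cycpow G ?s' = ?s' # tl (cycpow G ?s')"
    using cs0 cycpow_pos[OF bg s'(1)] by (cases "cycpow G ?s'") auto
  have setb: "set (cycpow G ?b @ [?b]) \<subseteq> arrows G"
  proof
    fix x assume "x \<in> set (cycpow G ?b @ [?b])"
    then have x: "x \<in> hes G" "vtx G x = vtx G ?b" using cycpow_snoc_set[OF bg b(1)] by blast+
    then have "\<not> trunc G x" using trunc_vtx[OF x(2)] nb by blast
    then show "x \<in> arrows G" using x by (simp add: arrows_def)
  qed
  define P where "P = (hedge G h, ?b # cycpow G ?s)"
  have vP: "valid_path G P"
    using valid_chain[of "cycpow G ?b @ [?b]" G] schain_cycpow_snoc[OF bg b(1)] setb listeq hb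
    unfolding P_def by simp
  have rel2P: "rel2 G h = pvec P" unfolding rel2_def P_def using listeq by simp
  have v1: "valid_path G (hedge G h, [?b])"
    using valid_chain[of "[?b]" G] ar_b hb by (simp add: schain_def)
  have ls': "length (cycpow G ?s') \<ge> 2" using trunc_len[OF bg s'(1) ns'] .
  have v3: "valid_path G (hedge G (succ G ?s'), tl (cycpow G ?s'))"
  proof -
    have "schain G ([?s'] @ tl (cycpow G ?s') @ [])" using schain_cycpow[OF bg s'(1)] cs'_cons by simp
    then have ch: "schain G (tl (cycpow G ?s'))" by (rule schain_infix)
    have st: "set (tl (cycpow G ?s')) \<subseteq> arrows G"
    proof
      fix x assume "x \<in> set (tl (cycpow G ?s'))"
      then have "x \<in> set (cycpow G ?s')" by (metis list.sel(2) list.set_sel(2))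
      then have x: "x \<in> hes G" "vtx G x = vtx G ?s'" using cycpow_set[OF bg s'(1)] by blast+
      then have "\<not> trunc G x" using trunc_vtx[OF x(2)] ns' by blast
      then show "x \<in> arrows G" using x by (simp add: arrows_def)
    qed
    have ne: "tl (cycpow G ?s') \<noteq> []" using ls' by (cases "cycpow G ?s'") auto
    have "hd (tl (cycpow G ?s')) = cycpow G ?s' ! 1" using ne by (cases "cycpow G ?s'") (auto simp: hd_conv_nth)
    also have "\<dots> = succ G ?s'" using cycpow_nth[OF bg s'(1), of 1] ls' by simp
    finally show ?thesis using valid_chain[OF ne ch st] by simp
  qed
  define \<rho>' where "\<rho>' = \<rho> - {rel2 G h}"
  obtain \<sigma> :: 'k where sig: "\<sigma> = 1 \<or> \<sigma> = -1" "(\<lambda>p. \<sigma> * rel1 G q ?s p) \<in> \<rho>"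
  proof (cases "rel1 G q ?s \<in> \<rho>")
    case True then show ?thesis using that[of 1] by simp
  next
    case False
    then have "rel1 G q ?s' \<in> \<rho>" using r1 by simp
    moreover have "rel1 G q ?s' = (\<lambda>p. (-1) * rel1 G q ?s p)"
      unfolding rel1_def using hs s'(2) by (auto simp: algebra_simps)
    ultimately show ?thesis using that[of "-1"] by simp
  qed
  let ?R = "\<lambda>p. \<sigma> * rel1 G q ?s p"
  have sig2: "\<sigma> * \<sigma> = 1" using sig(1) by auto
  have Rneq: "?R \<noteq> rel2 G h"
  proof
    assume e: "?R = rel2 G h"
    have A1: "?R (hedge G ?s, cycpow G ?s) = \<sigma> * q ?s" unfolding rel1_def pvec_def using cneq by simp
    have A2: "rel2 G h (hedge G ?s, cycpow G ?s) = 0" unfolding rel2P P_def pvec_def by auto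
    have A3: "?R (hedge G ?s, cycpow G ?s) = rel2 G h (hedge G ?s, cycpow G ?s)" using e by (rule fun_cong)
    have "\<sigma> * q ?s = 0" using A3 unfolding A1 A2 .
    moreover have "\<sigma> \<noteq> 0" using sig(1) by auto
    ultimately show False using qs by simp
  qed
  have R3neq: "rel3 G ?b ?s' \<noteq> (rel2 G h :: _ \<Rightarrow> 'k)"
  proof
    assume e: "rel3 G ?b ?s' = (rel2 G h :: _ \<Rightarrow> 'k)"
    have "rel2 G h P = (1::'k)" unfolding rel2P pvec_def by simp
    moreover have "rel3 G ?b ?s' P = (0::'k)" unfolding rel3_def pvec_def P_def using lb lbs by auto
    ultimately show False using e by simp
  qed
  have Rin: "?R \<in> \<rho>'" using sig(2) Rneq unfolding \<rho>'_def by simp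
  have R3in: "rel3 G ?b ?s' \<in> \<rho>'" using r3 R3neq unfolding \<rho>'_def by simp
  define c where "c = 1 / (\<sigma> * q ?s)"
  define k where "k = q ?s' / q ?s"
  define Y1 where "Y1 = pmult G (\<lambda>p. c * pvec (hedge G h, [?b]) p) ?R"
  define Y3 where "Y3 = pmult G (rel3 G ?b ?s') (\<lambda>p. k * pvec (hedge G (succ G ?s'), tl (cycpow G ?s')) p)"
  have Y1in: "Y1 \<in> gen_ideal G \<rho>'" unfolding Y1_def
    by (rule gen_ideal.lmult[OF gen_ideal.gen[OF Rin] KQ_pvec[OF v1]])
  have Y3in: "Y3 \<in> gen_ideal G \<rho>'" unfolding Y3_def
    by (rule gen_ideal.rmult[OF gen_ideal.gen[OF R3in] KQ_pvec[OF v3]])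
  have csig: "c * \<sigma> = 1 / q ?s" unfolding c_def using sig(1) qs by auto
  have Ysum: "(\<lambda>p. Y1 p + Y3 p) = rel2 G h"
  proof
    fix r :: "'h set \<times> 'h list"
    obtain e l where r: "r = (e, l)" by (cases r)
    show "Y1 r + Y3 r = rel2 G h r"
    proof (cases "valid_path G r \<and> e = hedge G h \<and> l \<noteq> [] \<and> hd l = ?b")
      case False
      have n1: "\<not> (valid_path G r \<and> fst r = hedge G h \<and> length [?b] \<le> length (snd r) \<and> take (length [?b]) (snd r) = [?b])"
        using False r by (cases l) auto
      have "Y1 r = 0" by (simp only: Y1_def pmult_pvec_left if_not_P[OF n1])
      moreover have n3: "\<not> (valid_path G r \<and> fst r = hedge G ?b \<and> length [?b, ?s'] \<le> length (snd r) \<and> take (length [?b, ?s']) (snd r) = [?b, ?s'])"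
        using False r hb by (cases l) auto
      have e3: "rel3 G ?b ?s' = (\<lambda>p. 1 * pvec (hedge G ?b, [?b, ?s']) p)" unfolding rel3_def by simp
      have "Y3 r = 0" unfolding Y3_def e3 by (simp only: pmult_pvec_left if_not_P[OF n3])
      moreover have "rel2 G h r = (0::'k)" unfolding rel2P pvec_def using False r vP P_def by auto
      ultimately show ?thesis by simp
    next
      case True
      then obtain l' where l: "l = ?b # l'" by (cases l) auto
      have c1: "valid_path G r \<and> fst r = hedge G h \<and> length [?b] \<le> length (snd r) \<and> take (length [?b]) (snd r) = [?b]"
        using True r l by auto
      have "Y1 r = c * ?R (ptgt G (hedge G h, [?b]), drop (length [?b]) (snd r))"
        by (simp only: Y1_def pmult_pvec_left if_P[OF c1])
      also have "\<dots> = c * ?R (hedge G ?s, l')" using r l by (simp add: ptgt_def)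
      also have "\<dots> = c * \<sigma> * ((if l' = cycpow G ?s then q ?s else 0) - (if l' = cycpow G ?s' then q ?s' else 0))"
        unfolding rel1_def pvec_def by simp
      also have "\<dots> = (if l' = cycpow G ?s then 1 else 0) - (if l' = cycpow G ?s' then k else 0)"
        using csig qs unfolding k_def by (auto simp: algebra_simps)
      finally have y1: "Y1 r = (if l' = cycpow G ?s then 1 else 0) - (if l' = cycpow G ?s' then k else 0)" .
      have e3: "rel3 G ?b ?s' = (\<lambda>p. 1 * pvec (hedge G ?b, [?b, ?s']) p)" unfolding rel3_def by simp
      have y3: "Y3 r = (if l' = cycpow G ?s' then k else 0)"
      proof (cases "l' \<noteq> [] \<and> hd l' = ?s'")
        case False
        have n3: "\<not> (valid_path G r \<and> fst r = hedge G ?b \<and> length [?b, ?s'] \<le> length (snd r) \<and> take (length [?b, ?s']) (snd r) = [?b, ?s'])"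
          using False r l by (cases l') auto
        have "Y3 r = 0" unfolding Y3_def e3 by (simp only: pmult_pvec_left if_not_P[OF n3])
        moreover have "l' \<noteq> cycpow G ?s'" using False cs'_cons by (metis list.sel(1) list.simps(3))
        ultimately show ?thesis by simp
      next
        case True
        then obtain T where T: "l' = ?s' # T" by (cases l') auto
        have c3: "valid_path G r \<and> fst r = hedge G ?b \<and> length [?b, ?s'] \<le> length (snd r) \<and> take (length [?b, ?s']) (snd r) = [?b, ?s']"
          using \<open>valid_path G r \<and> e = hedge G h \<and> l \<noteq> [] \<and> hd l = ?b\<close> r l T hb by auto
        have "Y3 r = 1 * (\<lambda>p. k * pvec (hedge G (succ G ?s'), tl (cycpow G ?s')) p)
             (ptgt G (hedge G ?b, [?b, ?s']), drop (length [?b, ?s']) (snd r))"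
          unfolding Y3_def e3 by (simp only: pmult_pvec_left if_P[OF c3])
        also have "\<dots> = (if T = tl (cycpow G ?s') then k else 0)"
          using r l T by (simp add: ptgt_def pvec_def)
        also have "\<dots> = (if l' = cycpow G ?s' then k else 0)"
          using T cs'_cons by (metis list.inject)
        finally show ?thesis .
      qed
      have "rel2 G h r = (if l' = cycpow G ?s then (1::'k) else 0)" unfolding rel2P pvec_def P_def using True r l by auto
      then show ?thesis using y1 y3 by simp
    qed
  qed
  have r2in: "rel2 G h \<in> gen_ideal G \<rho>'" using gen_ideal.add[OF Y1in Y3in] Ysum by simp
  have sub: "\<rho> \<subseteq> gen_ideal G \<rho>'"
  proof
    fix f assume f: "f \<in> \<rho>"
    show "f \<in> gen_ideal G \<rho>'"
    proof (cases "f = rel2 G h")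
      case True then show ?thesis using r2in by simp
    next
      case False then have "f \<in> \<rho>'" unfolding \<rho>'_def using f by simp
      then show ?thesis by (rule gen_ideal.gen)
    qed
  qed
  have "gen_ideal G \<rho> \<subseteq> gen_ideal G \<rho>'" using gen_ideal_closure[OF sub] by (rule subsetI)
  moreover have "gen_ideal G \<rho>' \<subseteq> gen_ideal G \<rho>" by (rule gen_ideal_mono) (simp add: \<rho>'_def)
  ultimately have e1: "gen_ideal G \<rho>' = gen_ideal G \<rho>" by (rule subset_antisym[rotated])
  have e2: "gen_ideal G \<rho> = gen_ideal G (brauer_relations G q)"
    using mg unfolding minimal_generating_set_def by (elim conjE)
  have ps: "\<rho>' \<subset> \<rho>" unfolding \<rho>'_def using inr by auto
  have "\<forall>\<rho>''. \<rho>'' \<subset> \<rho> \<longrightarrow> gen_ideal G \<rho>'' \<noteq> gen_ideal G (brauer_relations G q)"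
    using mg unfolding minimal_generating_set_def by (elim conjE)
  then show False using ps e1 e2 by simp
qed

theorem lemma2p1:
  fixes G :: "('h, 'v) bgraph" and q :: "'h \<Rightarrow> 'k::field"
    and \<rho> :: "('h set \<times> 'h list \<Rightarrow> 'k) set"
  assumes "brauer_graph G" and "quantizing G q" and "\<not> is_A2 G"
    and "minimal_generating_set G q \<rho>"
  shows "(\<forall>h\<in>hes G. \<not> trunc G h \<and> \<not> trunc G (iota G h) \<longrightarrow>
            rel1 G q h \<in> \<rho> \<or> rel1 G q (iota G h) \<in> \<rho>)
       \<and> (\<forall>a b. type3 G a b \<longrightarrow> rel3 G a b \<in> \<rho>)
       \<and> (\<forall>h\<in>hes G. trunc G h \<longrightarrow>
            (rel2 G h \<in> \<rho> \<longleftrightarrow> trunc G (iota G (succ G (iota G h)))))"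
proof (intro conjI ballI allI impI)
  fix h assume "h \<in> hes G" "\<not> trunc G h \<and> \<not> trunc G (iota G h)"
  then show "rel1 G q h \<in> \<rho> \<or> rel1 G q (iota G h) \<in> \<rho>"
    using part1[OF assms(1,2,4)] by blast
next
  fix a b assume "type3 G a b"
  then show "rel3 G a b \<in> \<rho>" using part2[OF assms(1,4)] by blast
next
  fix h assume h: "h \<in> hes G" "trunc G h"
  show "rel2 G h \<in> \<rho> \<longleftrightarrow> trunc G (iota G (succ G (iota G h)))"
  proof
    assume "rel2 G h \<in> \<rho>"
    then show "trunc G (iota G (succ G (iota G h)))" using part3b[OF assms h] by blast
  next
    assume "trunc G (iota G (succ G (iota G h)))"
    then show "rel2 G h \<in> \<rho>" using part3a[OF assms(1,4) h] by blast
  qed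
qed

end
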